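(* Let $\mu\in L^\infty(\mathbb{D})$ with $\|\mu\|_{L^\infty(\mathbb{D})}\le1$, put $g=\mathbf{P}\mu$, and suppose that $N_g(z)=(1-|z|^2)^2|g'(z)|^2\le\eta$ for all $z\in\mathbb{D}$, for some constant $\eta>0$. Then for every $t\in\mathbb{C}$ with $|t|\le\pi/16$ and every $r\in(0,1)$, \[ \int_\mathbb{T}\big|\mathrm{e}^{t g(r\zeta)}\big|\,\mathrm{d}s(\zeta)\le 4\,(1-r^2)^{-\eta|t|^2/4}. \]
   Context: $\mathbb{D}$ is the open unit disk, $\mathbb{T}=\partial\mathbb{D}$ the unit circle. $\mathrm{d}s$ is normalized arc length measure on $\mathbb{T}$ (total mass $1$) and $\mathrm{d}A$ is normalized area measure ($\mathrm{d}A=\pi^{-1}\mathrm{d}x\,\mathrm{d}y$). For $\mu\in L^1(\mathbb{D})$, the Bergman projection is $\mathbf{P}\mu(z)=\int_\mathbb{D}\frac{\mu(w)}{(1-z\bar w)^2}\,\mathrm{d}A(w)$, $z\in\mathbb{D}$. *)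

theory Defs
  imports "HOL-Analysis.Analysis"
begin

text \<open>Bergman projection with respect to normalized area measure dA = pi^-1 dx dy on the unit disk.\<close>
definition bergman_proj :: "(complex \<Rightarrow> complex) \<Rightarrow> complex \<Rightarrow> complex" where
  "bergman_proj \<mu> z =
     (1 / of_real pi) * (LINT w : ball 0 1 | lebesgue. \<mu> w / (1 - z * cnj w)\<^sup>2)"

text \<open>Integral over the unit circle against normalized arc length ds.\<close>
definition circle_avg :: "(complex \<Rightarrow> real) \<Rightarrow> real" where
  "circle_avg f = (1 / (2 * pi)) * (LINT \<theta> : {0..2*pi} | lborel. f (cis \<theta>))"

end

theory Submission
  imports Defs "HOL-Complex_Analysis.Complex_Analysis"
begin


abbreviation "D \<equiv> ball (0::complex) 1"

lemma measD: "measure lebesgue D = pi"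
proof -
  have "emeasure lebesgue D = emeasure lborel D" by simp
  hence "measure lebesgue D = measure lborel D" by (simp add: measure_def)
  also have "\<dots> = pi" using content_ball[of 1 "0::complex"] by (simp add: unit_ball_vol_2)
  finally show ?thesis .
qed

lemma emeasD: "emeasure lebesgue D \<noteq> \<infinity>"
  by (simp add: emeasure_ball)

lemma integ_mu:
  fixes \<mu> F :: "complex \<Rightarrow> complex"
  assumes meas: "set_borel_measurable lebesgue D \<mu>"
    and bdd: "AE w in lebesgue. w \<in> D \<longrightarrow> norm (\<mu> w) \<le> 1"
    and Fm: "F \<in> borel_measurable borel"
    and Fb: "\<And>w. w \<in> D \<Longrightarrow> norm (F w) \<le> B"
  shows "set_integrable lebesgue D (\<lambda>w. \<mu> w * F w)"
proof (rule set_integrable_bound[where f="\<lambda>_. complex_of_real B"])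
  show "set_integrable lebesgue D (\<lambda>_. complex_of_real B)"
    using emeasD unfolding set_integrable_def
    by (intro integrable_scaleR_left integrable_real_indicator) (auto simp: less_top)
  have "(\<lambda>x. indicator D x *\<^sub>R \<mu> x) \<in> borel_measurable lebesgue"
    using meas by (simp add: set_borel_measurable_def)
  moreover have "F \<in> borel_measurable lebesgue"
    using Fm by (intro measurable_completion) simp
  ultimately have "(\<lambda>x. (indicator D x *\<^sub>R \<mu> x) * F x) \<in> borel_measurable lebesgue"
    by measurable
  then show "set_borel_measurable lebesgue D (\<lambda>w. \<mu> w * F w)"
    by (simp add: set_borel_measurable_def)
  show "AE x in lebesgue. x \<in> D \<longrightarrow> norm (\<mu> x * F x) \<le> norm (complex_of_real B)"
    using bdd
  proof eventually_elim
    case (elim x)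
    show ?case
    proof
      assume x: "x \<in> D"
      have "norm (\<mu> x * F x) \<le> 1 * B" unfolding norm_mult
        using elim x Fb[OF x] by (intro mult_mono) auto
      also have "\<dots> \<le> norm (complex_of_real B)" by simp
      finally show "norm (\<mu> x * F x) \<le> norm (complex_of_real B)" .
    qed
  qed
qed

lemma int_bound:
  fixes f :: "complex \<Rightarrow> complex"
  assumes "set_integrable lebesgue D f"
    and "AE w in lebesgue. w \<in> D \<longrightarrow> norm (f w) \<le> c"
  shows "norm (LINT w:D|lebesgue. f w) \<le> c * pi"
proof -
  have "norm (LINT w:D|lebesgue. f w) \<le> (LINT w:D|lebesgue. norm (f w))"
    by (rule set_integral_norm_bound[OF assms(1)])
  also have "\<dots> \<le> (LINT w:D|lebesgue. c)"
    unfolding set_lebesgue_integral_def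
  proof (rule integral_mono_AE)
    show "integrable lebesgue (\<lambda>x. indicator D x *\<^sub>R norm (f x))"
    proof -
      have "integrable lebesgue (\<lambda>x. norm (indicator D x *\<^sub>R f x))"
        using assms(1) unfolding set_integrable_def by (rule integrable_norm)
      then show ?thesis by simp
    qed
    show "integrable lebesgue (\<lambda>x. indicator D x *\<^sub>R c)"
      using emeasD
      by (intro integrable_scaleR_left integrable_real_indicator) (auto simp: less_top)
    show "AE x in lebesgue. indicator D x *\<^sub>R norm (f x) \<le> indicator D x *\<^sub>R c"
      using assms(2) by eventually_elim (auto simp: indicator_def)
  qed
  also have "\<dots> = c * pi"
    using set_integral_const[of D lebesgue c] emeasD measD by simp
  finally show ?thesis .
qed



lemma meas_cnj[measurable]: "cnj \<in> borel_measurable borel"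
  by (intro borel_measurable_continuous_onI continuous_intros)

lemma meas_K: "(\<lambda>w. c / (1 - z * cnj w) ^ n) \<in> borel_measurable borel"
  by measurable

lemma den_lb: assumes "norm z < 1" "norm (w::complex) < 1"
  shows "norm (1 - z * cnj w) \<ge> 1 - norm z"
proof -
  have "norm (z * cnj w) \<le> norm z" using assms by (simp add: norm_mult mult_left_le)
  then show ?thesis using norm_triangle_ineq2[of 1 "z * cnj w"] by simp
qed

lemma integ_K:
  fixes \<mu> :: "complex \<Rightarrow> complex"
  assumes meas: "set_borel_measurable lebesgue D \<mu>"
    and bdd: "AE w in lebesgue. w \<in> D \<longrightarrow> norm (\<mu> w) \<le> 1"
    and z: "norm z < 1"
  shows "set_integrable lebesgue D (\<lambda>w. \<mu> w * (c / (1 - z * cnj w) ^ n))"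
proof (rule integ_mu[OF meas bdd meas_K])
  fix w :: complex assume w: "w \<in> D"
  have lb: "norm (1 - z * cnj w) \<ge> 1 - norm z" using den_lb[OF z] w by simp
  have "norm (c / (1 - z * cnj w) ^ n) = norm c / norm (1 - z * cnj w) ^ n"
    by (simp add: norm_divide norm_power)
  also have "\<dots> \<le> norm c / (1 - norm z) ^ n"
    using lb z by (intro divide_left_mono power_mono mult_pos_pos zero_less_power) auto
  finally show "norm (c / (1 - z * cnj w) ^ n) \<le> norm c / (1 - norm z) ^ n" .
qed




lemma R_identity:
  fixes m k z cw :: complex
  assumes a: "1 - z * cw \<noteq> 0" and b: "1 - (z + k) * cw \<noteq> 0" and k: "k \<noteq> 0"
  shows "(m * (1 / (1 - (z + k) * cw) ^ 2) - m * (1 / (1 - z * cw) ^ 2)) / k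
           - m * (2 * cw / (1 - z * cw) ^ 3)
         = m * (k * cw^2 * (3 * (1 - z * cw) - 2 * k * cw) / ((1 - z * cw)^3 * (1 - (z + k) * cw)^2))"
proof -
  have gen: "(m * (1 / b ^ 2) - m * (1 / a ^ 2)) / k - m * (2 * c / a ^ 3)
     = m * (k * c^2 * (3 * a - 2 * k * c) / (a^3 * b^2))"
    if "a \<noteq> 0" "b \<noteq> 0" "k \<noteq> 0" "b = a - k * c" for a b c :: complex
  proof -
    have "m * (1 / b ^ 2) - m * (1 / a ^ 2) = m * (a^2 - b^2) / (a^2 * b^2)"
      using that(1,2) by (simp add: field_simps)
    hence "(m * (1 / b ^ 2) - m * (1 / a ^ 2)) / k = m * ((a^2 - b^2) / (k * a^2 * b^2))"
      by (simp add: field_simps)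
    also have "a^2 - b^2 = k * (c * (2 * a - k * c))" unfolding that(4) by (simp add: algebra_simps power2_eq_square)
    also have "m * (k * (c * (2 * a - k * c)) / (k * a^2 * b^2)) = m * (c * (2 * a - k * c) / (a^2 * b^2))"
      using that(3) by (simp add: mult.assoc)
    finally have e: "(m * (1 / b ^ 2) - m * (1 / a ^ 2)) / k = m * (c * (2 * a - k * c) / (a^2 * b^2))" .
    have "m * (c * (2 * a - k * c) / (a^2 * b^2)) - m * (2 * c / a ^ 3) = m * ((c * (2 * a - k * c) * a - 2 * c * b^2) / (a^3 * b^2))"
      using that(1,2) by (simp add: field_simps power2_eq_square power3_eq_cube)
    also have "c * (2 * a - k * c) * a - 2 * c * b^2 = k * c^2 * (3 * a - 2 * k * c)"
      unfolding that(4) by (simp add: algebra_simps power2_eq_square)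
    finally show ?thesis unfolding e .
  qed
  show ?thesis by (rule gen) (use a b k in \<open>auto simp: algebra_simps\<close>)
qed

lemma R_bound:
  fixes k z w :: complex
  assumes z: "norm z < 1" and w: "norm w < 1" and k: "norm k < (1 - norm z) / 2"
  shows "norm (k * cnj w^2 * (3 * (1 - z * cnj w) - 2 * k * cnj w) / ((1 - z * cnj w)^3 * (1 - (z + k) * cnj w)^2))
     \<le> 32 * norm k / (1 - norm z) ^ 5"
proof -
  define \<delta> where "\<delta> = 1 - norm z"
  have dp: "\<delta> > 0" "\<delta> \<le> 1" using z by (auto simp: \<delta>_def)
  have a: "norm (1 - z * cnj w) \<ge> \<delta>" using den_lb[OF z w] by (simp add: \<delta>_def)
  have a2: "norm (1 - z * cnj w) \<le> 2"
    using norm_triangle_ineq4[of 1 "z * cnj w"] z w by (simp add: norm_mult) (smt (verit) mult_left_le norm_ge_zero)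
  have kcw: "norm (k * cnj w) \<le> norm k" using w by (simp add: norm_mult mult_left_le)
  have "norm (1 - (z + k) * cnj w) \<ge> norm (1 - z * cnj w) - norm (k * cnj w)"
    using norm_triangle_ineq2[of "1 - z * cnj w" "k * cnj w"] by (simp add: algebra_simps)
  hence b: "norm (1 - (z + k) * cnj w) \<ge> \<delta> / 2" using a kcw k by (simp add: \<delta>_def)
  have num: "norm (3 * (1 - z * cnj w) - 2 * k * cnj w) \<le> 8"
  proof -
    have "norm (3 * (1 - z * cnj w) - 2 * k * cnj w) \<le> norm (3 * (1 - z * cnj w)) + norm (2 * k * cnj w)"
      by (rule norm_triangle_ineq4)
    also have "\<dots> = 3 * norm (1 - z * cnj w) + 2 * norm (k * cnj w)"
      by (simp only: norm_mult mult.assoc) simp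
    also have "\<dots> \<le> 3 * 2 + 2 * 1"
    proof -
      have "norm k * 2 < 1 - norm z" using k by (simp add: field_simps)
      hence "2 * norm k \<le> 1" using norm_ge_zero[of z] by linarith
      then show ?thesis using a2 kcw by linarith
    qed
    finally show ?thesis by simp
  qed
  have cw2: "norm (cnj w ^ 2) \<le> 1" using w by (simp add: norm_power power_le_one)
  have "norm (k * cnj w^2 * (3 * (1 - z * cnj w) - 2 * k * cnj w)) \<le> norm k * 1 * 8"
    unfolding norm_mult using num cw2 by (intro mult_mono) auto
  moreover have "norm ((1 - z * cnj w)^3 * (1 - (z + k) * cnj w)^2) \<ge> \<delta>^3 * (\<delta>/2)^2"
    unfolding norm_mult norm_power using a b dp by (intro mult_mono power_mono) auto
  ultimately have "norm (k * cnj w^2 * (3 * (1 - z * cnj w) - 2 * k * cnj w) / ((1 - z * cnj w)^3 * (1 - (z + k) * cnj w)^2))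
     \<le> (norm k * 8) / (\<delta>^3 * (\<delta>/2)^2)"
    unfolding norm_divide using dp by (intro frac_le) auto
  also have "\<dots> = 32 * norm k / \<delta>^5" using dp by (simp add: field_simps)
  finally show ?thesis by (simp add: \<delta>_def)
qed




lemma meas_R: "(\<lambda>w. k * cnj w^2 * (3 * (1 - z * cnj w) - 2 * k * cnj w) / ((1 - z * cnj w)^3 * (1 - (z + k) * cnj w)^2)) \<in> borel_measurable borel"
  by measurable

lemma G_deriv:
  fixes \<mu> :: "complex \<Rightarrow> complex"
  assumes meas: "set_borel_measurable lebesgue D \<mu>"
    and bdd: "AE w in lebesgue. w \<in> D \<longrightarrow> norm (\<mu> w) \<le> 1"
    and z: "norm z < 1"
  shows "((\<lambda>z. LINT w:D|lebesgue. \<mu> w / (1 - z * cnj w)^2) has_field_derivative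
           (LINT w:D|lebesgue. \<mu> w * (2 * cnj w / (1 - z * cnj w)^3))) (at z)"
proof -
  define \<delta> where "\<delta> = 1 - norm z"
  have dp: "\<delta> > 0" using z by (simp add: \<delta>_def)
  define G where "G = (\<lambda>z. LINT w:D|lebesgue. \<mu> w * (1 / (1 - z * cnj w)^2))"
  define Dz where "Dz = (LINT w:D|lebesgue. \<mu> w * (2 * cnj w / (1 - z * cnj w)^3))"
  define R where "R = (\<lambda>k w. k * cnj w^2 * (3 * (1 - z * cnj w) - 2 * k * cnj w) / ((1 - z * cnj w)^3 * (1 - (z + k) * cnj w)^2))"
  have Geq: "(\<lambda>z. LINT w:D|lebesgue. \<mu> w / (1 - z * cnj w)^2) = G"
    unfolding G_def by simp
  have key: "norm ((G (z + k) - G z) / k - Dz) \<le> 32 * norm k / \<delta> ^ 5 * pi"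
    if k0: "k \<noteq> 0" and k: "norm k < \<delta> / 2" for k
  proof -
    have zk: "norm (z + k) < 1"
      using norm_triangle_ineq[of z k] k dp by (simp add: \<delta>_def field_simps)
    have i1: "set_integrable lebesgue D (\<lambda>w. \<mu> w * (1 / (1 - (z + k) * cnj w)^2))"
      by (rule integ_K[OF meas bdd zk])
    have i2: "set_integrable lebesgue D (\<lambda>w. \<mu> w * (1 / (1 - z * cnj w)^2))"
      by (rule integ_K[OF meas bdd z])
    have i3: "set_integrable lebesgue D (\<lambda>w. \<mu> w * (2 * cnj w / (1 - z * cnj w)^3))"
    proof (rule integ_mu[OF meas bdd])
      show "(\<lambda>w. 2 * cnj w / (1 - z * cnj w)^3) \<in> borel_measurable borel" by measurable
      fix w :: complex assume w: "w \<in> D"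
      have lb: "norm (1 - z * cnj w) \<ge> \<delta>" using den_lb[OF z] w by (simp add: \<delta>_def)
      have "norm (2 * cnj w / (1 - z * cnj w)^3) = 2 * norm w / norm (1 - z * cnj w) ^ 3"
        by (simp add: norm_divide norm_power norm_mult)
      also have "\<dots> \<le> 2 / \<delta> ^ 3"
        using lb dp w by (intro frac_le power_mono) auto
      finally show "norm (2 * cnj w / (1 - z * cnj w)^3) \<le> 2 / \<delta> ^ 3" .
    qed
    have i12: "set_integrable lebesgue D (\<lambda>w. (\<mu> w * (1 / (1 - (z + k) * cnj w)^2) - \<mu> w * (1 / (1 - z * cnj w)^2)) / k)"
      using i1 i2 by (intro set_integrable_divide set_integral_diff(1))
    have iR: "set_integrable lebesgue D (\<lambda>w. \<mu> w * R k w)"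
    proof (rule integ_mu[OF meas bdd])
      show "R k \<in> borel_measurable borel" unfolding R_def by (rule meas_R)
      fix w :: complex assume w: "w \<in> D"
      show "norm (R k w) \<le> 32 * norm k / \<delta> ^ 5"
        unfolding R_def \<delta>_def using R_bound[OF z, of w k] w k by (simp add: \<delta>_def)
    qed
    have "(G (z + k) - G z) / k - Dz
        = (LINT w:D|lebesgue. (\<mu> w * (1 / (1 - (z + k) * cnj w)^2) - \<mu> w * (1 / (1 - z * cnj w)^2)) / k
              - \<mu> w * (2 * cnj w / (1 - z * cnj w)^3))"
      unfolding G_def Dz_def using i1 i2 i3 i12
      by (simp add: set_integral_diff(2))
    also have "\<dots> = (LINT w:D|lebesgue. \<mu> w * R k w)"
    proof (rule set_lebesgue_integral_cong)
      show "D \<in> sets lebesgue" by simp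
      show "\<forall>w. w \<in> D \<longrightarrow> (\<mu> w * (1 / (1 - (z + k) * cnj w)^2) - \<mu> w * (1 / (1 - z * cnj w)^2)) / k
              - \<mu> w * (2 * cnj w / (1 - z * cnj w)^3) = \<mu> w * R k w"
      proof (intro allI impI)
        fix w :: complex assume w: "w \<in> D"
        have a: "norm (1 - z * cnj w) \<ge> \<delta>" using den_lb[OF z] w by (simp add: \<delta>_def)
        have b: "norm (1 - (z + k) * cnj w) \<ge> 1 - norm (z + k)" using den_lb[OF zk] w by simp
        show "(\<mu> w * (1 / (1 - (z + k) * cnj w)^2) - \<mu> w * (1 / (1 - z * cnj w)^2)) / k
              - \<mu> w * (2 * cnj w / (1 - z * cnj w)^3) = \<mu> w * R k w"
          unfolding R_def by (rule R_identity) (use a b dp zk k0 in auto)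
      qed
    qed
    also have "norm \<dots> \<le> 32 * norm k / \<delta> ^ 5 * pi"
    proof (rule int_bound[OF iR])
      show "AE w in lebesgue. w \<in> D \<longrightarrow> norm (\<mu> w * R k w) \<le> 32 * norm k / \<delta> ^ 5"
        using bdd
      proof eventually_elim
        case (elim w)
        show ?case
        proof
          assume w: "w \<in> D"
          have "norm (R k w) \<le> 32 * norm k / \<delta> ^ 5"
            unfolding R_def using R_bound[OF z, of w k] w k by (simp add: \<delta>_def)
          then have "norm (\<mu> w) * norm (R k w) \<le> 1 * (32 * norm k / \<delta> ^ 5)"
            using elim w by (intro mult_mono) auto
          then show "norm (\<mu> w * R k w) \<le> 32 * norm k / \<delta> ^ 5" by (simp add: norm_mult)
        qed
      qed
    qed
    finally show ?thesis .
  qed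
  have "((\<lambda>k. (G (z + k) - G z) / k - Dz) \<longlongrightarrow> 0) (at 0)"
  proof (rule Lim_null_comparison)
    show "\<forall>\<^sub>F k in at 0. norm ((G (z + k) - G z) / k - Dz) \<le> 32 * norm k / \<delta> ^ 5 * pi"
      unfolding eventually_at
    proof (intro exI[of _ "\<delta>/2"] conjI ballI impI)
      show "\<delta> / 2 > 0" using dp by simp
      fix k :: complex assume "k \<in> UNIV" "k \<noteq> 0 \<and> dist k 0 < \<delta> / 2"
      then show "norm ((G (z + k) - G z) / k - Dz) \<le> 32 * norm k / \<delta> ^ 5 * pi"
        by (intro key) (auto simp: dist_norm)
    qed
    show "((\<lambda>k. 32 * norm k / \<delta> ^ 5 * pi) \<longlongrightarrow> 0) (at (0::complex))"
      using dp by (auto intro!: tendsto_eq_intros)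
  qed
  hence "(G has_field_derivative Dz) (at z)"
    unfolding DERIV_def by (rule LIM_zero_cancel)
  thus ?thesis unfolding Geq Dz_def .
qed

lemma bergman_holo:
  fixes \<mu> :: "complex \<Rightarrow> complex"
  assumes meas: "set_borel_measurable lebesgue D \<mu>"
    and bdd: "AE w in lebesgue. w \<in> D \<longrightarrow> norm (\<mu> w) \<le> 1"
  shows "bergman_proj \<mu> holomorphic_on D"
proof -
  have "bergman_proj \<mu> = (\<lambda>z. (1 / of_real pi) * (LINT w:D|lebesgue. \<mu> w / (1 - z * cnj w)^2))"
    by (simp add: bergman_proj_def fun_eq_iff)
  moreover have "(\<lambda>z. LINT w:D|lebesgue. \<mu> w / (1 - z * cnj w)^2) holomorphic_on D"
    unfolding holomorphic_on_def field_differentiable_def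
  proof
    fix x :: complex assume "x \<in> D"
    then have "norm x < 1" by simp
    from has_field_derivative_at_within[OF G_deriv[OF meas bdd this]]
    show "\<exists>f'. ((\<lambda>z. LINT w:D|lebesgue. \<mu> w / (1 - z * cnj w)^2) has_field_derivative f') (at x within D)"
      by blast
  qed
  ultimately show ?thesis by (auto intro!: holomorphic_intros)
qed

lemma bergman_0:
  fixes \<mu> :: "complex \<Rightarrow> complex"
  assumes meas: "set_borel_measurable lebesgue D \<mu>"
    and bdd: "AE w in lebesgue. w \<in> D \<longrightarrow> norm (\<mu> w) \<le> 1"
  shows "norm (bergman_proj \<mu> 0) \<le> 1"
proof -
  have i: "set_integrable lebesgue D (\<lambda>w. \<mu> w * (1 / (1 - 0 * cnj w) ^ 2))"
    by (rule integ_K[OF meas bdd]) simp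
  have "norm (LINT w:D|lebesgue. \<mu> w) \<le> 1 * pi"
    by (rule int_bound) (use i bdd in simp_all)
  then show ?thesis by (simp add: bergman_proj_def norm_divide norm_mult)
qed




lemma compare:
  fixes M N M1 N1 :: "real \<Rightarrow> real" and c r :: real
  assumes dM: "\<And>x. -1 < x \<Longrightarrow> x < 1 \<Longrightarrow> (M has_real_derivative M1 x) (at x)"
    and dN: "\<And>x. -1 < x \<Longrightarrow> x < 1 \<Longrightarrow> (N has_real_derivative N1 x) (at x)"
    and NM: "\<And>x. -1 < x \<Longrightarrow> x < 1 \<Longrightarrow> N x = x * M1 x"
    and Mpos: "\<And>x. -1 < x \<Longrightarrow> x < 1 \<Longrightarrow> M x \<ge> 0"
    and N1b: "\<And>x. 0 < x \<Longrightarrow> x < 1 \<Longrightarrow> N1 x \<le> x * c / (1 - x^2)^2 * M x"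
    and c: "c \<ge> 0" and r: "0 \<le> r" "r < 1"
  shows "M r \<le> M 0 * (1 - r^2) powr (- (c / 4))"
proof -
  define \<alpha> where "\<alpha> = c / 4"
  have a0: "\<alpha> \<ge> 0" using c by (simp add: \<alpha>_def)
  define \<Phi> where "\<Phi> = (\<lambda>x::real. exp (- \<alpha> * ln (1 - x^2)))"
  define \<Phi>d where "\<Phi>d = (\<lambda>x::real. 2 * \<alpha> * x * \<Phi> x / (1 - x^2))"
  define \<Psi> where "\<Psi> = (\<lambda>x::real. 2 * \<alpha> * x^2 * \<Phi> x / (1 - x^2))"
  define \<Psi>d where "\<Psi>d = (\<lambda>x::real. 4 * \<alpha> * x * \<Phi> x * (1 + \<alpha> * x^2) / (1 - x^2)^2)"
  have x2: "1 - x^2 > 0" if "-1 < x" "x < 1" for x :: real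
  proof -
    have "\<bar>x\<bar> < 1" using that by auto
    hence "x^2 < 1" by (simp add: abs_square_less_1)
    thus ?thesis by simp
  qed
  have Phipos: "\<Phi> x > 0" for x by (simp add: \<Phi>_def)
  have dPhi: "(\<Phi> has_real_derivative \<Phi>d x) (at x)" if "-1 < x" "x < 1" for x
  proof -
    have "(\<Phi> has_real_derivative \<Phi> x * (- \<alpha> * ((- (2 * x)) / (1 - x^2)))) (at x)"
      unfolding \<Phi>_def using x2[OF that]
      by (auto intro!: derivative_eq_intros simp: power2_eq_square)
    moreover have "\<Phi> x * (- \<alpha> * ((- (2 * x)) / (1 - x^2))) = \<Phi>d x"
      unfolding \<Phi>d_def by (simp add: field_simps)
    ultimately show ?thesis by simp
  qed
  have dPsi: "(\<Psi> has_real_derivative \<Psi>d x) (at x)" if "-1 < x" "x < 1" for x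
  proof -
    have ne: "1 - x^2 \<noteq> 0" using x2[OF that] by simp
    have "(\<Psi> has_real_derivative
       ((2 * \<alpha> * (2 * x) * \<Phi> x + 2 * \<alpha> * x^2 * \<Phi>d x) * (1 - x^2) - 2 * \<alpha> * x^2 * \<Phi> x * (- (2 * x))) / (1 - x^2)^2) (at x)"
      unfolding \<Psi>_def using ne
      by (auto intro!: derivative_eq_intros dPhi[OF that] simp: power2_eq_square)
    moreover have "((2 * \<alpha> * (2 * x) * \<Phi> x + 2 * \<alpha> * x^2 * \<Phi>d x) * (1 - x^2) - 2 * \<alpha> * x^2 * \<Phi> x * (- (2 * x))) / (1 - x^2)^2 = \<Psi>d x"
      unfolding \<Psi>d_def \<Phi>d_def using ne by (simp add: field_simps)
    ultimately show ?thesis by simp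
  qed
  define W where "W = (\<lambda>x. \<Psi> x * M x - \<Phi> x * N x)"
  have dW: "(W has_real_derivative (\<Psi>d x * M x - \<Phi> x * N1 x)) (at x)" if "-1 < x" "x < 1" for x
  proof -
    have "(W has_real_derivative (\<Psi>d x * M x + \<Psi> x * M1 x - (\<Phi>d x * N x + \<Phi> x * N1 x))) (at x)"
      unfolding W_def by (auto intro!: derivative_eq_intros dPhi dPsi dM dN that)
    moreover have "\<Psi> x * M1 x = \<Phi>d x * N x"
      unfolding \<Psi>_def \<Phi>d_def NM[OF that] by (simp add: power2_eq_square)
    ultimately show ?thesis by simp
  qed
  have W0: "W 0 = 0" unfolding W_def \<Psi>_def using NM[of 0] by simp
  have Wnn: "W x \<ge> 0" if "0 \<le> x" "x < 1" for x
  proof -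
    have "W 0 \<le> W x"
    proof (rule DERIV_nonneg_imp_increasing_open[OF that(1)])
      fix y assume y: "0 < y" "y < x"
      have y1: "-1 < y" "y < 1" using y that by auto
      have "\<Psi>d y * M y - \<Phi> y * N1 y \<ge> 0"
      proof -
        have "\<Phi> y * N1 y \<le> \<Phi> y * (y * c / (1 - y^2)^2 * M y)"
          using N1b[of y] y y1 Phipos[of y] by (intro mult_left_mono) auto
        also have "\<dots> \<le> \<Psi>d y * M y"
        proof -
          have "\<Phi> y * (y * c / (1 - y^2)^2 * M y) = (4 * \<alpha> * y * \<Phi> y * 1 / (1 - y^2)^2) * M y"
            by (simp add: \<alpha>_def)
          also have "\<dots> \<le> (4 * \<alpha> * y * \<Phi> y * (1 + \<alpha> * y^2) / (1 - y^2)^2) * M y"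
            using a0 y Phipos[of y] Mpos[OF y1]
            by (intro mult_right_mono divide_right_mono mult_left_mono) auto
          finally show ?thesis by (simp add: \<Psi>d_def)
        qed
        finally show ?thesis by simp
      qed
      then show "\<exists>d. (W has_real_derivative d) (at y) \<and> d \<ge> 0" using dW[OF y1] by blast
    next
      show "continuous_on {0..x} W"
        using dW that by (intro DERIV_continuous_on[of _ _ "\<lambda>x. \<Psi>d x * M x - \<Phi> x * N1 x"])
          (auto intro: has_field_derivative_at_within)
    qed
    thus ?thesis using W0 by simp
  qed
  define Q where "Q = (\<lambda>x. M x / \<Phi> x)"
  have dQ: "(Q has_real_derivative ((M1 x * \<Phi> x - M x * \<Phi>d x) / (\<Phi> x)^2)) (at x)" if "-1 < x" "x < 1" for x
    unfolding Q_def using Phipos[of x]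
    by (auto intro!: derivative_eq_intros dM dPhi that simp: power2_eq_square)
  have "Q r \<le> Q 0"
  proof (rule DERIV_nonpos_imp_decreasing_open[OF r(1)])
    fix y assume y: "0 < y" "y < r"
    have y1: "-1 < y" "y < 1" using y r by auto
    have "y * (M1 y * \<Phi> y - M y * \<Phi>d y) = - W y"
      unfolding W_def \<Psi>_def \<Phi>d_def NM[OF y1] by (simp add: algebra_simps power2_eq_square)
    also have "\<dots> \<le> 0" using Wnn[of y] y y1 by simp
    finally have "M1 y * \<Phi> y - M y * \<Phi>d y \<le> 0" using y by (simp add: mult_le_0_iff)
    hence "(M1 y * \<Phi> y - M y * \<Phi>d y) / (\<Phi> y)^2 \<le> 0" by (intro divide_nonpos_nonneg) auto
    then show "\<exists>d. (Q has_real_derivative d) (at y) \<and> d \<le> 0" using dQ[OF y1] by blast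
  next
    show "continuous_on {0..r} Q"
      using dQ r by (intro DERIV_continuous_on[of _ _ "\<lambda>x. (M1 x * \<Phi> x - M x * \<Phi>d x) / (\<Phi> x)^2"])
        (auto intro: has_field_derivative_at_within)
  qed
  hence "M r / \<Phi> r \<le> M 0" by (simp add: Q_def \<Phi>_def)
  hence "M r \<le> M 0 * \<Phi> r" using Phipos[of r] by (simp add: divide_le_eq)
  also have "\<Phi> r = (1 - r^2) powr (- (c / 4))"
    using x2[of r] r by (simp add: \<Phi>_def powr_def \<alpha>_def)
  finally show ?thesis .
qed




lemma Re_real_deriv:
  assumes "(F has_field_derivative F') (at (of_real x))"
  shows "((\<lambda>x. Re (F (of_real x))) has_real_derivative Re F') (at x within S)"
  using has_vector_derivative_real_field[OF assms, of S]
  by (simp add: has_vector_derivative_complex_iff)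

lemma Im_real_deriv:
  assumes "(F has_field_derivative F') (at (of_real x))"
  shows "((\<lambda>x. Im (F (of_real x))) has_real_derivative Im F') (at x within S)"
  using has_vector_derivative_real_field[OF assms, of S]
  by (simp add: has_vector_derivative_complex_iff)

lemma alg:
  fixes e a1 a2 :: complex and r E :: real
  shows "r * (Re (e * a1 + of_real r * e * e * a2) * E + Re (of_real r * e * a1) * Re (e * a1) * E)
     = (Im (of_real r * \<i> * e * a1 + of_real r * e * a2 * (of_real r * \<i> * e)) * E
        + Im (of_real r * e * a1) * (Re (a1 * (of_real r * \<i> * e)) * E))
       + (norm (of_real r * e * a1))^2 * E"
  by (simp only: cmod_power2) (simp add: algebra_simps power2_eq_square)




lemma radial:
  fixes h :: "complex \<Rightarrow> complex" and c r :: real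
  assumes holo: "h holomorphic_on ball 0 1"
    and bd: "\<And>z. norm z < 1 \<Longrightarrow> (norm (deriv h z))^2 \<le> c / (1 - (norm z)^2)^2"
    and c: "c \<ge> 0" and r: "0 \<le> r" "r < 1"
  shows "integral {0..2*pi} (\<lambda>t. exp (Re (h (of_real r * cis t)))) \<le> 2*pi*exp (Re (h 0)) * (1 - r^2) powr (-(c/4))"
proof -
  define h1 where "h1 = deriv h"
  define h2 where "h2 = deriv h1"
  have holo1: "h1 holomorphic_on ball 0 1" unfolding h1_def by (intro holomorphic_deriv holo) auto
  have holo2: "h2 holomorphic_on ball 0 1" unfolding h2_def by (intro holomorphic_deriv holo1) auto
  have dh: "(h has_field_derivative h1 z) (at z)" if "norm z < 1" for z
    unfolding h1_def using that by (intro holomorphic_derivI[OF holo]) auto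
  have dh1: "(h1 has_field_derivative h2 z) (at z)" if "norm z < 1" for z
    unfolding h2_def using that by (intro holomorphic_derivI[OF holo1]) auto
  have ct0: "continuous_on (ball 0 1) h" using holo by (rule holomorphic_on_imp_continuous_on)
  have ct1: "continuous_on (ball 0 1) h1" using holo1 by (rule holomorphic_on_imp_continuous_on)
  have ct2: "continuous_on (ball 0 1) h2" using holo2 by (rule holomorphic_on_imp_continuous_on)
  define S where "S = ({-1<..<1::real} \<times> (UNIV :: real set))"
  have zzS: "(\<lambda>p. of_real (fst p) * cis (snd p)) ` S \<subseteq> ball 0 1"
    by (auto simp: S_def norm_mult)
  have czz: "continuous_on S (\<lambda>p. of_real (fst p) * cis (snd p) :: complex)"
    by (intro continuous_intros)
  have c0: "continuous_on S (\<lambda>p. h (of_real (fst p) * cis (snd p)))"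
    by (rule continuous_on_compose2[OF ct0 czz zzS])
  have c1: "continuous_on S (\<lambda>p. h1 (of_real (fst p) * cis (snd p)))"
    by (rule continuous_on_compose2[OF ct1 czz zzS])
  have c2: "continuous_on S (\<lambda>p. h2 (of_real (fst p) * cis (snd p)))"
    by (rule continuous_on_compose2[OF ct2 czz zzS])
  have cT: "continuous_on {0..2*pi} (\<lambda>t. F (x, t))" if "continuous_on S F" "-1 < x" "x < 1" for F :: "real \<times> real \<Rightarrow> real" and x
    by (rule continuous_on_compose2[OF that(1)]) (use that in \<open>auto simp: S_def intro!: continuous_intros\<close>)
  have sub: "{-1<..<1} \<times> cbox 0 (2*pi) \<subseteq> S" by (auto simp: S_def)
  define E where "E = (\<lambda>x t. exp (Re (h (of_real x * cis t))))"
  define fM1 where "fM1 = (\<lambda>x t. Re (cis t * h1 (of_real x * cis t)) * E x t)"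
  define fN where "fN = (\<lambda>x t. Re (of_real x * cis t * h1 (of_real x * cis t)) * E x t)"
  define fN1 where "fN1 = (\<lambda>x t. Re (cis t * h1 (of_real x * cis t) + of_real x * cis t * cis t * h2 (of_real x * cis t)) * E x t
      + Re (of_real x * cis t * h1 (of_real x * cis t)) * Re (cis t * h1 (of_real x * cis t)) * E x t)"
  define M where "M = (\<lambda>x. integral {0..2*pi} (E x))"
  define M1 where "M1 = (\<lambda>x. integral {0..2*pi} (fM1 x))"
  define N where "N = (\<lambda>x. integral {0..2*pi} (fN x))"
  define N1 where "N1 = (\<lambda>x. integral {0..2*pi} (fN1 x))"
  have cE: "continuous_on S (\<lambda>p. E (fst p) (snd p))"
    unfolding E_def by (intro continuous_intros c0)
  have cM1: "continuous_on S (\<lambda>p. fM1 (fst p) (snd p))"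
    unfolding fM1_def E_def by (intro continuous_intros c0 c1)
  have cN: "continuous_on S (\<lambda>p. fN (fst p) (snd p))"
    unfolding fN_def E_def by (intro continuous_intros c0 c1)
  have cN1: "continuous_on S (\<lambda>p. fN1 (fst p) (snd p))"
    unfolding fN1_def E_def by (intro continuous_intros c0 c1 c2)
  have dE: "((\<lambda>x. E x t) has_real_derivative fM1 x t) (at x within A)" if "-1 < x" "x < 1" for x t A
  proof -
    have n: "norm (of_real x * cis t) < 1" using that by (simp add: norm_mult)
    have "((\<lambda>w. h (w * cis t)) has_field_derivative h1 (of_real x * cis t) * cis t) (at (of_real x))"
      by (rule DERIV_chain2[where f=h and g="\<lambda>w. w * cis t" and x="of_real x", OF dh[OF n]]) (auto intro!: derivative_eq_intros)
    from Re_real_deriv[OF this, where S=A]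
    have "((\<lambda>x. Re (h (of_real x * cis t))) has_real_derivative Re (h1 (of_real x * cis t) * cis t)) (at x within A)" .
    from DERIV_chain2[OF DERIV_exp this] show ?thesis unfolding E_def fM1_def
      by (simp add: mult.commute)
  qed
  have dfN: "((\<lambda>x. fN x t) has_real_derivative fN1 x t) (at x within A)" if "-1 < x" "x < 1" for x t A
  proof -
    have n: "norm (of_real x * cis t) < 1" using that by (simp add: norm_mult)
    have d1: "((\<lambda>w. h1 (w * cis t)) has_field_derivative h2 (of_real x * cis t) * cis t) (at (of_real x))"
      by (rule DERIV_chain2[where f=h1 and g="\<lambda>w. w * cis t" and x="of_real x", OF dh1[OF n]]) (auto intro!: derivative_eq_intros)
    have "((\<lambda>w. w * cis t * h1 (w * cis t)) has_field_derivative
        cis t * h1 (of_real x * cis t) + of_real x * cis t * (h2 (of_real x * cis t) * cis t)) (at (of_real x))"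
      using d1 by (auto intro!: derivative_eq_intros)
    from Re_real_deriv[OF this, where S=A]
    have a: "((\<lambda>x. Re (of_real x * cis t * h1 (of_real x * cis t))) has_real_derivative
        Re (cis t * h1 (of_real x * cis t) + of_real x * cis t * (h2 (of_real x * cis t) * cis t))) (at x within A)" .
    have "((\<lambda>x. Re (of_real x * cis t * h1 (of_real x * cis t)) * E x t) has_real_derivative
       Re (cis t * h1 (of_real x * cis t) + of_real x * cis t * (h2 (of_real x * cis t) * cis t)) * E x t
       + fM1 x t * Re (of_real x * cis t * h1 (of_real x * cis t))) (at x within A)"
      by (rule DERIV_mult[OF a dE[OF that]])
    then show ?thesis unfolding fN_def fN1_def fM1_def by (simp add: algebra_simps)
  qed
  have U: "convex {-1<..<1::real}" by simp
  have intT: "F2 x integrable_on cbox 0 (2*pi)" if "continuous_on S (\<lambda>p. F2 (fst p) (snd p))" "-1 < x" "x < 1" for F2 :: "real \<Rightarrow> real \<Rightarrow> real" and x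
    using cT[OF that(1-3)] by (simp add: integrable_continuous_real)
  have cU: "continuous_on ({-1<..<1} \<times> cbox 0 (2*pi)) (\<lambda>(x, t). F x t)" if "continuous_on S (\<lambda>p. F (fst p) (snd p))" for F
    using continuous_on_subset[OF that sub] by (simp add: case_prod_unfold)
  have dM: "(M has_real_derivative M1 x) (at x)" if "-1 < x" "x < 1" for x
  proof -
    have "((\<lambda>x. integral (cbox 0 (2*pi)) (E x)) has_field_derivative integral (cbox 0 (2*pi)) (fM1 x)) (at x within {-1<..<1})"
      by (rule leibniz_rule_field_derivative[OF dE _ cU[OF cM1] _ U])
         (use that intT[OF cE] in auto)
    then show ?thesis unfolding M_def M1_def using that by (simp add: at_within_open[of x "{-1<..<1}"])
  qed
  have dN: "(N has_real_derivative N1 x) (at x)" if "-1 < x" "x < 1" for x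
  proof -
    have "((\<lambda>x. integral (cbox 0 (2*pi)) (fN x)) has_field_derivative integral (cbox 0 (2*pi)) (fN1 x)) (at x within {-1<..<1})"
      by (rule leibniz_rule_field_derivative[OF dfN _ cU[OF cN1] _ U])
         (use that intT[OF cN] in auto)
    then show ?thesis unfolding N_def N1_def using that by (simp add: at_within_open[of x "{-1<..<1}"])
  qed
  have NM: "N x = x * M1 x" for x
  proof -
    have "fN x = (\<lambda>t. x * fM1 x t)" unfolding fN_def fM1_def by (simp add: fun_eq_iff mult.assoc)
    then show ?thesis unfolding N_def M1_def by simp
  qed
  define fd where "fd = (\<lambda>x t. Im (of_real x * \<i> * cis t * h1 (of_real x * cis t) + of_real x * cis t * h2 (of_real x * cis t) * (of_real x * \<i> * cis t)) * E x t
        + Im (of_real x * cis t * h1 (of_real x * cis t)) * (Re (h1 (of_real x * cis t) * (of_real x * \<i> * cis t)) * E x t))"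
  have ibp: "(fd x has_integral 0) {0..2*pi}" if "-1 < x" "x < 1" for x
  proof -
    define B where "B = (\<lambda>t. Im (of_real x * cis t * h1 (of_real x * cis t)) * E x t)"
    have dB: "(B has_real_derivative fd x t) (at t within A)" for t A
    proof -
      have e: "exp (\<i> * of_real t) = cis t" by (simp add: cis_conv_exp)
      have n: "norm (of_real x * exp (\<i> * of_real t)) < 1" using that by (simp add: e norm_mult)
      have d1: "((\<lambda>w. h1 (of_real x * exp (\<i> * w))) has_field_derivative h2 (of_real x * exp (\<i> * of_real t)) * (of_real x * (exp (\<i> * of_real t) * \<i>))) (at (of_real t))"
        by (rule DERIV_chain2[where f=h1 and g="\<lambda>w. of_real x * exp (\<i> * w)" and x="of_real t", OF dh1[OF n]])
           (auto intro!: derivative_eq_intros)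
      have d0: "((\<lambda>w. h (of_real x * exp (\<i> * w))) has_field_derivative h1 (of_real x * exp (\<i> * of_real t)) * (of_real x * (exp (\<i> * of_real t) * \<i>))) (at (of_real t))"
        by (rule DERIV_chain2[where f=h and g="\<lambda>w. of_real x * exp (\<i> * w)" and x="of_real t", OF dh[OF n]])
           (auto intro!: derivative_eq_intros)
      have dF: "((\<lambda>w. of_real x * exp (\<i> * w) * h1 (of_real x * exp (\<i> * w))) has_field_derivative
          of_real x * (exp (\<i> * of_real t) * \<i>) * h1 (of_real x * exp (\<i> * of_real t))
          + of_real x * exp (\<i> * of_real t) * (h2 (of_real x * exp (\<i> * of_real t)) * (of_real x * (exp (\<i> * of_real t) * \<i>)))) (at (of_real t))"
        using d1 by (auto intro!: derivative_eq_intros)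
      have dIm: "((\<lambda>t. Im (of_real x * cis t * h1 (of_real x * cis t))) has_real_derivative
           Im (of_real x * \<i> * cis t * h1 (of_real x * cis t) + of_real x * cis t * h2 (of_real x * cis t) * (of_real x * \<i> * cis t))) (at t within A)"
        using Im_real_deriv[OF dF, where S=A] by (simp add: e cis_conv_exp[symmetric] algebra_simps)
      have dRe: "((\<lambda>t. Re (h (of_real x * cis t))) has_real_derivative
           Re (h1 (of_real x * cis t) * (of_real x * \<i> * cis t))) (at t within A)"
        using Re_real_deriv[OF d0, where S=A] by (simp add: e cis_conv_exp[symmetric] algebra_simps)
      have dEt: "((\<lambda>t. E x t) has_real_derivative E x t * Re (h1 (of_real x * cis t) * (of_real x * \<i> * cis t))) (at t within A)"
        unfolding E_def by (rule DERIV_chain2[OF DERIV_exp dRe])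
      show ?thesis unfolding B_def fd_def
        using DERIV_mult[OF dIm dEt] by (simp add: algebra_simps)
    qed
    have "(fd x has_integral (B (2*pi) - B 0)) {0..2*pi}"
      by (rule fundamental_theorem_of_calculus) (auto simp: has_real_derivative_iff_has_vector_derivative[symmetric] intro: dB)
    moreover have "B (2*pi) = B 0" by (simp add: B_def E_def)
    ultimately show ?thesis by simp
  qed
  have intE: "E x integrable_on {0..2*pi}" if "-1 < x" "x < 1" for x
    using intT[OF cE that] by simp
  have intN1: "fN1 x integrable_on {0..2*pi}" if "-1 < x" "x < 1" for x
    using intT[OF cN1 that] by simp
  have N1b: "N1 x \<le> x * c / (1 - x^2)^2 * M x" if x: "0 < x" "x < 1" for x
  proof -
    have x1: "-1 < x" "x < 1" using x by auto
    define G where "G = (\<lambda>t. (norm (of_real x * cis t * h1 (of_real x * cis t)))^2 * E x t)"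
    have pw: "x * fN1 x t = fd x t + G t" for t
      unfolding fN1_def fd_def G_def using alg[of x "cis t" "h1 (of_real x * cis t)" "h2 (of_real x * cis t)" "E x t"]
      by (simp add: mult.assoc)
    have ifd: "fd x integrable_on {0..2*pi}" using ibp[OF x1] by blast
    have ixN1: "(\<lambda>t. x * fN1 x t) integrable_on {0..2*pi}" using integrable_cmul[OF intN1[OF x1], of x] by simp
    have iG: "G integrable_on {0..2*pi}"
    proof -
      have "(\<lambda>t. x * fN1 x t - fd x t) integrable_on {0..2*pi}" using ixN1 ifd by (rule integrable_diff)
      moreover have "(\<lambda>t. x * fN1 x t - fd x t) = G" using pw by (simp add: fun_eq_iff)
      ultimately show ?thesis by simp
    qed
    have "x * N1 x = integral {0..2*pi} (\<lambda>t. x * fN1 x t)" unfolding N1_def by simp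
    also have "\<dots> = integral {0..2*pi} (\<lambda>t. fd x t + G t)" using pw by simp
    also have "\<dots> = integral {0..2*pi} (fd x) + integral {0..2*pi} G" using ifd iG by (rule integral_add)
    also have "integral {0..2*pi} (fd x) = 0" using ibp[OF x1] by (rule integral_unique)
    also have "integral {0..2*pi} G \<le> integral {0..2*pi} (\<lambda>t. x^2 * (c / (1 - x^2)^2) * E x t)"
    proof (rule integral_le[OF iG])
      show "(\<lambda>t. x^2 * (c / (1 - x^2)^2) * E x t) integrable_on {0..2*pi}"
        using integrable_cmul[OF intE[OF x1], of "x^2 * (c / (1 - x^2)^2)"] by simp
      fix t :: real
      have nz: "norm (of_real x * cis t) = x" using x by (simp add: norm_mult)
      have "(norm (h1 (of_real x * cis t)))^2 \<le> c / (1 - x^2)^2"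
        using bd[of "of_real x * cis t"] nz x unfolding h1_def by simp
      hence "x^2 * (norm (h1 (of_real x * cis t)))^2 \<le> x^2 * (c / (1 - x^2)^2)"
        by (intro mult_left_mono) auto
      hence "(norm (of_real x * cis t * h1 (of_real x * cis t)))^2 \<le> x^2 * (c / (1 - x^2)^2)"
        using x by (simp add: norm_mult power_mult_distrib)
      then show "G t \<le> x^2 * (c / (1 - x^2)^2) * E x t"
        unfolding G_def by (intro mult_right_mono) (auto simp: E_def)
    qed
    also have "integral {0..2*pi} (\<lambda>t. x^2 * (c / (1 - x^2)^2) * E x t) = x * (x * c / (1 - x^2)^2 * M x)"
      unfolding M_def by (simp add: power2_eq_square)
    finally have "x * N1 x \<le> x * (x * c / (1 - x^2)^2 * M x)" by simp
    then show ?thesis using x(1) by (simp only: mult_le_cancel_left_pos)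
  qed
  have Mpos: "M x \<ge> 0" if "-1 < x" "x < 1" for x
    unfolding M_def using intE[OF that] by (intro integral_nonneg) (auto simp: E_def)
  have "M r \<le> M 0 * (1 - r^2) powr (- (c / 4))"
    by (rule compare[OF dM dN NM Mpos N1b c r])
  moreover have "M 0 = 2 * pi * exp (Re (h 0))" unfolding M_def E_def by simp
  ultimately show ?thesis unfolding M_def E_def by simp
qed




theorem mainTheorem4:
  fixes \<mu> :: "complex \<Rightarrow> complex" and \<eta> :: real and t :: complex and r :: real
  assumes meas: "set_borel_measurable lebesgue (ball 0 1) \<mu>"
    and bdd: "AE w in lebesgue. w \<in> ball 0 1 \<longrightarrow> norm (\<mu> w) \<le> 1"
    and eta_pos: "\<eta> > 0"
    and Ng: "\<forall>z \<in> ball 0 1. (1 - (norm z)\<^sup>2)\<^sup>2 * (norm (deriv (bergman_proj \<mu>) z))\<^sup>2 \<le> \<eta>"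
    and t_le: "norm t \<le> pi / 16"
    and r: "0 < r" "r < 1"
  shows "circle_avg (\<lambda>\<zeta>. norm (exp (t * bergman_proj \<mu> (of_real r * \<zeta>))))
           \<le> 4 * (1 - r\<^sup>2) powr (- (\<eta> * (norm t)\<^sup>2 / 4))"
proof -
  define g where "g = bergman_proj \<mu>"
  define h where "h = (\<lambda>z. t * g z)"
  have hg: "g holomorphic_on ball 0 1" unfolding g_def using bergman_holo[OF meas bdd] by simp
  have hh: "h holomorphic_on ball 0 1" unfolding h_def by (intro holomorphic_intros hg)
  have bd: "(norm (deriv h z))^2 \<le> (\<eta> * (norm t)^2) / (1 - (norm z)^2)^2" if z: "norm z < 1" for z
  proof -
    have "g field_differentiable at z"
      using hg z by (meson holomorphic_on_imp_differentiable_at mem_ball_0 open_ball)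
    hence "deriv h z = t * deriv g z" unfolding h_def by (rule deriv_cmult)
    hence e: "(norm (deriv h z))^2 = (norm t)^2 * (norm (deriv g z))^2" by (simp add: norm_mult power_mult_distrib)
    have pos: "(1 - (norm z)^2)^2 > 0"
    proof -
      have "(norm z)^2 < 1" using z by (simp add: power_less_one_iff abs_square_less_1)
      thus ?thesis by simp
    qed
    have "(1 - (norm z)\<^sup>2)\<^sup>2 * (norm (deriv g z))\<^sup>2 \<le> \<eta>" using Ng z by (simp add: g_def)
    hence "(norm (deriv g z))\<^sup>2 \<le> \<eta> / (1 - (norm z)\<^sup>2)\<^sup>2" using pos by (simp add: pos_le_divide_eq mult.commute)
    hence "(norm t)^2 * (norm (deriv g z))^2 \<le> (norm t)^2 * (\<eta> / (1 - (norm z)\<^sup>2)\<^sup>2)"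
      by (intro mult_left_mono) auto
    thus ?thesis using e by (simp add: mult.commute)
  qed
  have c: "\<eta> * (norm t)^2 \<ge> 0" using eta_pos by simp
  have rad: "integral {0..2*pi} (\<lambda>\<theta>. exp (Re (h (of_real r * cis \<theta>))))
     \<le> 2*pi*exp (Re (h 0)) * (1 - r^2) powr (-((\<eta> * (norm t)^2)/4))"
    by (rule radial[OF hh bd c]) (use r in auto)
  have cont: "continuous_on {0..2*pi} (\<lambda>\<theta>. exp (Re (h (of_real r * cis \<theta>))))"
  proof -
    have "continuous_on {0..2*pi} (\<lambda>\<theta>. h (of_real r * cis \<theta>))"
      by (rule continuous_on_compose2[OF holomorphic_on_imp_continuous_on[OF hh]])
         (use r in \<open>auto simp: norm_mult intro!: continuous_intros\<close>)
    thus ?thesis by (intro continuous_intros)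
  qed
  have "circle_avg (\<lambda>\<zeta>. norm (exp (t * bergman_proj \<mu> (of_real r * \<zeta>))))
      = (1 / (2 * pi)) * (LINT \<theta> : {0..2*pi} | lborel. exp (Re (h (of_real r * cis \<theta>))))"
    unfolding circle_avg_def h_def g_def by (simp add: norm_exp_eq_Re)
  also have "(LINT \<theta> : {0..2*pi} | lborel. exp (Re (h (of_real r * cis \<theta>))))
      = integral {0..2*pi} (\<lambda>\<theta>. exp (Re (h (of_real r * cis \<theta>))))"
    by (rule set_borel_integral_eq_integral(2))
       (use borel_integrable_compact[OF compact_Icc cont] in \<open>simp add: set_integrable_def\<close>)
  also have "(1 / (2 * pi)) * \<dots> \<le> (1 / (2 * pi)) * (2*pi*exp (Re (h 0)) * (1 - r^2) powr (-((\<eta> * (norm t)^2)/4)))"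
    using rad by (intro mult_left_mono) auto
  also have "\<dots> = exp (Re (h 0)) * (1 - r^2) powr (-((\<eta> * (norm t)^2)/4))" by simp
  also have "\<dots> \<le> 4 * (1 - r^2) powr (-((\<eta> * (norm t)^2)/4))"
  proof (rule mult_right_mono)
    have "Re (h 0) \<le> norm (h 0)" by (rule complex_Re_le_cmod)
    also have "\<dots> = norm t * norm (g 0)" by (simp add: h_def norm_mult)
    also have "\<dots> \<le> (pi / 16) * 1"
      using t_le bergman_0[OF meas bdd] by (intro mult_mono) (auto simp: g_def)
    also have "\<dots> \<le> 1" using pi_less_4 by simp
    finally have "exp (Re (h 0)) \<le> exp 1" by simp
    also have "\<dots> \<le> 4" using exp_le by simp
    finally show "exp (Re (h 0)) \<le> 4" .
  qed simp
  finally show ?thesis by simp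
qed


end
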